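(* Let $D\ge3$, $q\ge2$, and let $Y$ be a code in the Hamming scheme $\mathrm H(D,q)$ (i.e. $Y\subseteq\mathcal Q^D$ with $1<|Y|<q^D$, $\mathcal Q=\{0,\dots,q-1\}$). Let $\delta=\delta(Y)$ be its minimum distance, $\delta^*=\delta^*(Y)$ its dual distance and $s^*=s^*(Y)$ its dual degree. Then $\delta\le\delta^*+s^*-1$, unless $q=2$ and $Y$ is a binary repetition code, i.e. $Y=\{u,v\}$ with $u,v$ differing in all $D$ coordinates.
   Context: The Hamming scheme $\mathrm H(D,q)$ has vertex set $X=\mathcal Q^D$ and relations $R_i=\{(u,v):u,v\text{ differ in exactly }i\text{ coordinates}\}$, with associate matrices $A_i$ and primitive idempotents $E_0=|X|^{-1}J,E_1,\dots,E_D$ in the standard (Krawtchouk) cometric ordering. Let $\chi_Y=\sum_{y\in Y}\hat y\in\mathbb C^X$. Then $\delta(Y)=\min\{i\ne0:\chi_Y^{\top}A_i\chi_Y\ne0\}$, $\delta^*(Y)=\min\{j\ne0:E_j\chi_Y\ne0\}$, $s^*(Y)=|\{j\ne0:E_j\chi_Y\ne0\}|$. *)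

theory Defs
  imports Complex_Main
begin

text \<open>Vertex set Q^D of the Hamming scheme H(D,q), Q = {0..q-1}: words are functions
  nat => nat with entries < q on coordinates 0..D-1 and 0 outside (canonical padding).\<close>
definition hamming_space :: "nat \<Rightarrow> nat \<Rightarrow> (nat \<Rightarrow> nat) set" where
  "hamming_space D q = {u. (\<forall>i<D. u i < q) \<and> (\<forall>i\<ge>D. u i = 0)}"

definition hdist :: "nat \<Rightarrow> (nat \<Rightarrow> nat) \<Rightarrow> (nat \<Rightarrow> nat) \<Rightarrow> nat" where
  "hdist D u v = card {i. i < D \<and> u i \<noteq> v i}"

definition assoc_mat :: "nat \<Rightarrow> nat \<Rightarrow> (nat \<Rightarrow> nat) \<Rightarrow> (nat \<Rightarrow> nat) \<Rightarrow> real" where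
  "assoc_mat D i u v = (if hdist D u v = i then 1 else 0)"

definition krawtchouk :: "nat \<Rightarrow> nat \<Rightarrow> nat \<Rightarrow> nat \<Rightarrow> real" where
  "krawtchouk D q j i = (\<Sum>h\<le>j. (-1) ^ h * (real q - 1) ^ (j - h)
        * real (i choose h) * real ((D - i) choose (j - h)))"

text \<open>Primitive idempotent E_j = |X|^{-1} sum_i Q_{ij} A_i with Q_{ij} = K_j(i)
  (standard Krawtchouk / cometric ordering); E_0 = |X|^{-1} J.\<close>
definition prim_idem :: "nat \<Rightarrow> nat \<Rightarrow> nat \<Rightarrow> (nat \<Rightarrow> nat) \<Rightarrow> (nat \<Rightarrow> nat) \<Rightarrow> real" where
  "prim_idem D q j u v = (\<Sum>i\<le>D. krawtchouk D q j i * assoc_mat D i u v) / real q ^ D"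

definition quad_A :: "nat \<Rightarrow> (nat \<Rightarrow> nat) set \<Rightarrow> nat \<Rightarrow> real" where
  "quad_A D Y i = (\<Sum>x\<in>Y. \<Sum>y\<in>Y. assoc_mat D i x y)"

definition Echi :: "nat \<Rightarrow> nat \<Rightarrow> (nat \<Rightarrow> nat) set \<Rightarrow> nat \<Rightarrow> (nat \<Rightarrow> nat) \<Rightarrow> real" where
  "Echi D q Y j u = (\<Sum>y\<in>Y. prim_idem D q j u y)"

definition min_dist :: "nat \<Rightarrow> (nat \<Rightarrow> nat) set \<Rightarrow> nat" where
  "min_dist D Y = Min {i \<in> {1..D}. quad_A D Y i \<noteq> 0}"

definition dual_support :: "nat \<Rightarrow> nat \<Rightarrow> (nat \<Rightarrow> nat) set \<Rightarrow> nat set" where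
  "dual_support D q Y = {j \<in> {1..D}. \<exists>u\<in>hamming_space D q. Echi D q Y j u \<noteq> 0}"

definition dual_dist :: "nat \<Rightarrow> nat \<Rightarrow> (nat \<Rightarrow> nat) set \<Rightarrow> nat" where
  "dual_dist D q Y = Min (dual_support D q Y)"

definition dual_degree :: "nat \<Rightarrow> nat \<Rightarrow> (nat \<Rightarrow> nat) set \<Rightarrow> nat" where
  "dual_degree D q Y = card (dual_support D q Y)"

end

theory Submission
  imports Defs "HOL-Analysis.Analysis" "HOL-Computational_Algebra.Polynomial"
begin

definition XR :: "nat set \<Rightarrow> nat \<Rightarrow> (nat \<Rightarrow> nat) set" where
  "XR R q = {b. (\<forall>i\<in>R. b i < q) \<and> (\<forall>i. i \<notin> R \<longrightarrow> b i = 0)}"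

lemma XR_insert:
  assumes "r \<notin> R"
  shows "XR (insert r R) q = (\<lambda>(c,b). b(r := c)) ` ({..<q} \<times> XR R q)"
proof
  show "XR (insert r R) q \<subseteq> (\<lambda>(c,b). b(r := c)) ` ({..<q} \<times> XR R q)"
  proof
    fix b assume b: "b \<in> XR (insert r R) q"
    have "b = (\<lambda>(c,b). b(r := c)) (b r, b(r := 0))" by auto
    moreover have "(b r, b(r := 0)) \<in> {..<q} \<times> XR R q"
      using b assms by (auto simp: XR_def)
    ultimately show "b \<in> (\<lambda>(c,b). b(r := c)) ` ({..<q} \<times> XR R q)" by blast
  qed
next
  show "(\<lambda>(c,b). b(r := c)) ` ({..<q} \<times> XR R q) \<subseteq> XR (insert r R) q"
    using assms by (auto simp: XR_def)
qed

lemma XR_inj: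
  assumes "r \<notin> R"
  shows "inj_on (\<lambda>(c,b). b(r := c)) ({..<q} \<times> XR R q)"
proof (rule inj_onI, clarify)
  fix c b c' b'
  assume b: "b \<in> XR R q" and b': "b' \<in> XR R q" and eq: "b(r := c) = b'(r := c')"
  have "c = c'" using fun_cong[OF eq, of r] by simp
  moreover have "b = b'"
  proof
    fix i show "b i = b' i"
    proof (cases "i = r")
      case True then show ?thesis using b b' assms by (simp add: XR_def)
    next
      case False then show ?thesis using fun_cong[OF eq, of i] by simp
    qed
  qed
  ultimately show "c = c' \<and> b = b'" by simp
qed

lemma XR_empty: "XR {} q = {\<lambda>_. 0}"
  by (auto simp: XR_def)

lemma finite_XR: "finite R \<Longrightarrow> finite (XR R q)"
proof (induction R rule: finite_induct)
  case empty then show ?case by (simp add: XR_empty)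
next
  case (insert r R) then show ?case by (simp add: XR_insert)
qed

lemma sum_prod_XR:
  fixes g :: "nat \<Rightarrow> nat \<Rightarrow> 'a::comm_semiring_1"
  assumes "finite R"
  shows "(\<Sum>b\<in>XR R q. \<Prod>i\<in>R. g i (b i)) = (\<Prod>i\<in>R. \<Sum>c<q. g i c)"
  using assms
proof (induction R rule: finite_induct)
  case empty then show ?case by (simp add: XR_empty)
next
  case (insert r R)
  define h where "h = (\<lambda>b. \<Prod>i\<in>insert r R. g i (b i))"
  define f where "f = (\<lambda>(c::nat,b::nat\<Rightarrow>nat). b(r := c))"
  have "(\<Sum>b\<in>XR (insert r R) q. \<Prod>i\<in>insert r R. g i (b i))
      = (\<Sum>x\<in>{..<q} \<times> XR R q. h (f x))"
  proof -
    have "sum h (f ` ({..<q} \<times> XR R q)) = sum (h \<circ> f) ({..<q} \<times> XR R q)"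
      by (rule sum.reindex) (use XR_inj[OF insert(2)] in \<open>simp add: f_def\<close>)
    then show ?thesis using XR_insert[OF insert(2)] by (simp add: f_def h_def)
  qed
  also have "\<dots> = (\<Sum>(c,b)\<in>{..<q} \<times> XR R q. \<Prod>i\<in>insert r R. g i ((b(r := c)) i))"
    by (simp add: f_def h_def case_prod_beta)
  also have "\<dots> = (\<Sum>(c,b)\<in>{..<q} \<times> XR R q. g r c * (\<Prod>i\<in>R. g i (b i)))"
  proof -
    have pw: "(\<Prod>i\<in>insert r R. g i ((b(r := c)) i)) = g r c * (\<Prod>i\<in>R. g i (b i))" for c b
    proof -
      have "(\<Prod>i\<in>R. g i ((b(r := c)) i)) = (\<Prod>i\<in>R. g i (b i))"
        using insert(2) by (intro prod.cong) auto
      moreover have "(\<Prod>i\<in>insert r R. g i ((b(r := c)) i)) = g r ((b(r := c)) r) * (\<Prod>i\<in>R. g i ((b(r := c)) i))"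
        by (rule prod.insert[OF insert(1,2)])
      ultimately show ?thesis by (metis fun_upd_same)
    qed
    show ?thesis by (simp only: pw)
  qed
  also have "\<dots> = (\<Sum>c<q. g r c) * (\<Sum>b\<in>XR R q. \<Prod>i\<in>R. g i (b i))"
    by (simp add: sum.cartesian_product[symmetric] sum_product)
  also have "\<dots> = (\<Prod>i\<in>insert r R. \<Sum>c<q. g i c)"
    using insert by simp
  finally show ?case .
qed

definition om :: "nat \<Rightarrow> complex" where
  "om q = exp (2 * of_real pi * \<i> / of_nat q)"

lemma om_pow: "om q ^ j = exp (2 * of_real pi * \<i> * of_nat j / of_nat q)"
  unfolding om_def exp_of_nat_mult[symmetric] by (simp add: field_simps)

lemma om_pow_eq: "q \<ge> 1 \<Longrightarrow> om q ^ j = om q ^ k \<longleftrightarrow> j mod q = k mod q"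
  unfolding om_pow by (rule complex_root_unity_eq)

lemma om_pow_1: "q \<ge> 1 \<Longrightarrow> om q ^ j = 1 \<longleftrightarrow> q dvd j"
  unfolding om_pow by (rule complex_root_unity_eq_1)

lemma om_q: "q \<ge> 1 \<Longrightarrow> om q ^ q = 1"
  by (simp add: om_pow_1)

lemma norm_om_pow: "norm (om q ^ j) = 1"
  unfolding om_pow by (simp add: norm_exp_eq_Re)

lemma cnj_om_mult: "cnj (om q ^ j) * om q ^ j = 1"
proof -
  have "cnj (om q ^ j) * om q ^ j = complex_of_real ((cmod (om q ^ j))\<^sup>2)"
    by (metis complex_norm_square mult.commute)
  then show ?thesis by (simp only: norm_om_pow) simp
qed

lemma coord_sum:
  assumes "q \<ge> 1"
  shows "(\<Sum>c<q. cnj (om q ^ (c * u)) * om q ^ (c * v)) = (if u mod q = v mod q then of_nat q else 0)"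
proof -
  define z where "z = cnj (om q ^ u) * om q ^ v"
  have zc: "cnj (om q ^ (c * u)) * om q ^ (c * v) = z ^ c" for c
    by (simp add: z_def power_mult_distrib power_mult mult.commute[of c])
  have zq: "z ^ q = 1"
  proof -
    have "z ^ q = cnj ((om q ^ q) ^ u) * (om q ^ q) ^ v"
      by (simp add: z_def power_mult_distrib flip: power_mult) (simp add: mult.commute)
    then show ?thesis using om_q[OF assms] by simp
  qed
  have z1: "z = 1 \<longleftrightarrow> u mod q = v mod q"
  proof -
    have "z = 1 \<longleftrightarrow> om q ^ u = om q ^ v"
    proof
      assume "z = 1"
      then have "om q ^ u * (cnj (om q ^ u) * om q ^ v) = om q ^ u" by (simp only: z_def mult_1_right)
      then show "om q ^ u = om q ^ v" using cnj_om_mult[of q u]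
        by (metis mult.assoc mult.commute mult_1_left)
    next
      assume "om q ^ u = om q ^ v"
      then show "z = 1" using cnj_om_mult[of q u] by (simp add: z_def)
    qed
    then show ?thesis using om_pow_eq[OF assms] by simp
  qed
  show ?thesis
    unfolding zc using sum_gp_strict[of z q] zq z1 by auto
qed

definition ch :: "nat set \<Rightarrow> nat \<Rightarrow> (nat \<Rightarrow> nat) \<Rightarrow> (nat \<Rightarrow> nat) \<Rightarrow> complex" where
  "ch R q b x = (\<Prod>i\<in>R. om q ^ (b i * x i))"

definition wt :: "nat set \<Rightarrow> (nat \<Rightarrow> nat) \<Rightarrow> nat" where
  "wt R b = card {i\<in>R. b i \<noteq> 0}"

definition dR :: "nat set \<Rightarrow> (nat \<Rightarrow> nat) \<Rightarrow> (nat \<Rightarrow> nat) \<Rightarrow> nat" where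
  "dR R x y = card {i\<in>R. x i \<noteq> y i}"

lemma ch_comm: "ch R q b x = ch R q x b"
  by (simp add: ch_def mult.commute)

lemma ch_zero: "ch R q (\<lambda>_. 0) x = 1"
  by (simp add: ch_def)

lemma prod_if_const:
  assumes "finite R"
  shows "(\<Prod>i\<in>R. if P i then (a::'a::comm_semiring_1) else 0) = (if \<forall>i\<in>R. P i then a ^ card R else 0)"
proof (cases "\<forall>i\<in>R. P i")
  case True then show ?thesis by simp
next
  case False
  then obtain i where "i \<in> R" "\<not> P i" by blast
  then have "(\<Prod>i\<in>R. if P i then a else 0) = 0"
    using assms by (intro prod_zero) auto
  then show ?thesis using False by auto
qed

lemma orth_gen:
  assumes "finite R" "q \<ge> 1"
  shows "(\<Sum>b\<in>XR R q. cnj (ch R q b x) * ch R q b z)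
       = (if \<forall>i\<in>R. x i mod q = z i mod q then of_nat q ^ card R else 0)"
proof -
  have "(\<Sum>b\<in>XR R q. cnj (ch R q b x) * ch R q b z)
      = (\<Sum>b\<in>XR R q. \<Prod>i\<in>R. cnj (om q ^ (b i * x i)) * om q ^ (b i * z i))"
    by (simp add: ch_def prod.distrib del: complex_cnj_power)
  also have "\<dots> = (\<Prod>i\<in>R. \<Sum>c<q. cnj (om q ^ (c * x i)) * om q ^ (c * z i))"
    by (rule sum_prod_XR[OF assms(1)])
  also have "\<dots> = (\<Prod>i\<in>R. if x i mod q = z i mod q then of_nat q else 0)"
    by (simp only: coord_sum[OF assms(2)])
  also have "\<dots> = (if \<forall>i\<in>R. x i mod q = z i mod q then of_nat q ^ card R else 0)"
    by (rule prod_if_const[OF assms(1)])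
  finally show ?thesis .
qed

lemma XR_eq_iff:
  assumes "a \<in> XR R q" "b \<in> XR R q"
  shows "(\<forall>i\<in>R. a i mod q = b i mod q) \<longleftrightarrow> a = b"
proof
  assume h: "\<forall>i\<in>R. a i mod q = b i mod q"
  show "a = b"
  proof
    fix i show "a i = b i"
      using h assms by (cases "i \<in> R") (auto simp: XR_def)
  qed
qed simp

lemma orth:
  assumes "finite R" "q \<ge> 1" "a \<in> XR R q" "b \<in> XR R q"
  shows "(\<Sum>x\<in>XR R q. cnj (ch R q a x) * ch R q b x) = (if a = b then of_nat q ^ card R else 0)"
  using orth_gen[OF assms(1,2), of a b] XR_eq_iff[OF assms(3,4)]
  by (simp add: ch_comm[of R q _ a] ch_comm[of R q _ b])

lemma prod_monom:
  assumes "finite A"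
  shows "(\<Prod>i\<in>A. monom (f i) (g i)) = monom (\<Prod>i\<in>A. f i) (\<Sum>i\<in>A. g i)"
  using assms by (induction A rule: finite_induct) (simp_all add: mult_monom)

lemma card_as_sum:
  assumes "finite R"
  shows "card {i\<in>R. P i} = (\<Sum>i\<in>R. if P i then 1 else 0)"
proof -
  have "(\<Sum>i\<in>R. if P i then 1 else (0::nat)) = (\<Sum>i\<in>R \<inter> {i. P i}. 1) + (\<Sum>i\<in>R \<inter> - {i. P i}. 0)"
    by (rule sum.If_cases[OF assms])
  also have "\<dots> = card {i\<in>R. P i}" by (simp add: Int_def)
  finally show ?thesis by simp
qed

lemma coeff_lin_power: "coeff ([:1, a:] ^ m) k = of_nat (m choose k) * a ^ k"
proof (induction m arbitrary: k)
  case 0 then show ?case by (cases k) auto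
next
  case (Suc m)
  have "[:1, a:] ^ Suc m = [:1, a:] ^ m + pCons 0 (smult a ([:1, a:] ^ m))"
    by simp
  show ?case
  proof (cases k)
    case 0 then show ?thesis using Suc[of 0] by (simp add: coeff_pCons)
  next
    case (Suc k')
    have "coeff ([:1, a:] ^ Suc m) k = coeff ([:1, a:] ^ m) (Suc k') + a * coeff ([:1, a:] ^ m) k'"
      by (simp add: Suc)
    also have "\<dots> = of_nat (m choose Suc k') * a ^ Suc k' + a * (of_nat (m choose k') * a ^ k')"
      using \<open>\<And>k. coeff ([:1, a:] ^ m) k = of_nat (m choose k) * a ^ k\<close> by simp
    also have "\<dots> = of_nat (Suc m choose k) * a ^ k"
      by (simp add: Suc algebra_simps)
    finally show ?thesis .
  qed
qed

lemma one_plus_monom: "1 + monom e 1 = [:1, e:]"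
  by (simp add: poly_eq_iff coeff_pCons coeff_1 split: nat.splits)

lemma one_plus_monom': "1 + monom e (Suc 0) = [:1, e:]"
  using one_plus_monom by simp

lemma coord_poly:
  assumes "q \<ge> 1" "u < q" "v < q"
  shows "(\<Sum>c<q. monom (cnj (om q ^ (c * u)) * om q ^ (c * v)) (if c \<noteq> 0 then 1 else 0))
       = [:1, (if u = v then of_nat q - 1 else - 1):]"
proof -
  define f where "f c = cnj (om q ^ (c * u)) * om q ^ (c * v)" for c
  have split: "{..<q} = insert 0 {1..<q}" using assms(1) by auto
  have A: "(\<Sum>c<q. monom (f c) (if c \<noteq> 0 then 1 else 0))
      = monom (f 0) 0 + (\<Sum>c\<in>{1..<q}. monom (f c) 1)"
    unfolding split by (subst sum.insert) (auto intro!: sum.cong)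
  have B: "(\<Sum>c\<in>{1..<q}. monom (f c) 1) = monom (\<Sum>c\<in>{1..<q}. f c) 1"
    by (simp add: monom_sum)
  have C: "(\<Sum>c\<in>{1..<q}. f c) = (\<Sum>c<q. f c) - f 0"
    unfolding split by (subst sum.insert) auto
  have E: "(\<Sum>c<q. f c) = (if u = v then of_nat q else 0)"
    using coord_sum[OF assms(1), of u v] assms unfolding f_def by simp
  have F: "f 0 = 1" by (simp add: f_def)
  have "(\<Sum>c<q. monom (f c) (if c \<noteq> 0 then 1 else 0)) = 1 + monom ((if u = v then of_nat q else 0) - 1) 1"
    unfolding A B C E F by (simp add: monom_0)
  also have "\<dots> = [:1, (if u = v then of_nat q - 1 else - 1):]"
    by (cases "u = v") (simp_all add: one_plus_monom')
  finally show ?thesis unfolding f_def .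
qed

lemma char_sum_poly:
  assumes "finite R" "q \<ge> 1" "\<forall>i\<in>R. x i < q \<and> y i < q"
  shows "(\<Sum>b\<in>XR R q. monom (cnj (ch R q b x) * ch R q b y) (wt R b))
       = [:1, - 1:] ^ dR R x y * [:1, of_nat q - 1:] ^ (card R - dR R x y)"
proof -
  define g where "g i c = monom (cnj (om q ^ (c * x i)) * om q ^ (c * y i)) (if c \<noteq> 0 then 1 else 0)" for i c
  have "monom (cnj (ch R q b x) * ch R q b y) (wt R b) = (\<Prod>i\<in>R. g i (b i))" for b
  proof -
    have "(\<Prod>i\<in>R. g i (b i)) = monom (\<Prod>i\<in>R. cnj (om q ^ (b i * x i)) * om q ^ (b i * y i))
                                      (\<Sum>i\<in>R. if b i \<noteq> 0 then 1 else 0)"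
      unfolding g_def by (rule prod_monom[OF assms(1)])
    also have "(\<Prod>i\<in>R. cnj (om q ^ (b i * x i)) * om q ^ (b i * y i)) = cnj (ch R q b x) * ch R q b y"
      by (simp add: ch_def prod.distrib del: complex_cnj_power)
    also have "(\<Sum>i\<in>R. if b i \<noteq> 0 then 1 else 0) = wt R b"
      unfolding wt_def by (rule card_as_sum[OF assms(1), symmetric])
    finally show ?thesis by simp
  qed
  then have "(\<Sum>b\<in>XR R q. monom (cnj (ch R q b x) * ch R q b y) (wt R b)) = (\<Sum>b\<in>XR R q. \<Prod>i\<in>R. g i (b i))"
    by simp
  also have "\<dots> = (\<Prod>i\<in>R. \<Sum>c<q. g i c)"
    by (rule sum_prod_XR[OF assms(1)])
  also have "\<dots> = (\<Prod>i\<in>R. if x i = y i then [:1, of_nat q - 1:] else [:1, - 1:])"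
    using coord_poly[OF assms(2)] assms(3) unfolding g_def by (intro prod.cong) auto
  also have "\<dots> = (\<Prod>i\<in>R \<inter> {i. x i = y i}. [:1, of_nat q - 1:]) * (\<Prod>i\<in>R \<inter> - {i. x i = y i}. [:1, - 1:])"
    by (rule prod.If_cases[OF assms(1)])
  also have "\<dots> = [:1, of_nat q - 1:] ^ card (R \<inter> {i. x i = y i}) * [:1, - 1:] ^ card (R \<inter> - {i. x i = y i})"
    by simp
  also have "card (R \<inter> - {i. x i = y i}) = dR R x y"
    unfolding dR_def by (rule arg_cong[where f=card]) auto
  also have "card (R \<inter> {i. x i = y i}) = card R - dR R x y"
  proof -
    have "R = (R \<inter> {i. x i = y i}) \<union> {i\<in>R. x i \<noteq> y i}" by auto
    then have "card R = card (R \<inter> {i. x i = y i}) + card {i\<in>R. x i \<noteq> y i}"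
      using assms(1) by (metis (no_types, lifting) card_Un_disjoint disjoint_iff finite_Int finite_Un mem_Collect_eq Int_iff)
    then show ?thesis unfolding dR_def by simp
  qed
  finally show ?thesis by (simp add: mult.commute)
qed

lemma kraw_char:
  assumes "finite R" "q \<ge> 1" "\<forall>i\<in>R. x i < q \<and> y i < q"
  shows "(\<Sum>b\<in>XR R q. if wt R b = j then cnj (ch R q b x) * ch R q b y else 0)
       = of_real (krawtchouk (card R) q j (dR R x y))"
proof -
  let ?d = "dR R x y" and ?n = "card R"
  have "(\<Sum>b\<in>XR R q. if wt R b = j then cnj (ch R q b x) * ch R q b y else 0)
      = coeff (\<Sum>b\<in>XR R q. monom (cnj (ch R q b x) * ch R q b y) (wt R b)) j"
    by (simp add: coeff_sum)
  also have "\<dots> = coeff ([:1, - 1:] ^ ?d * [:1, of_nat q - 1:] ^ (?n - ?d)) j"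
    by (simp only: char_sum_poly[OF assms])
  also have "\<dots> = (\<Sum>h\<le>j. (of_nat (?d choose h) * (- 1) ^ h) * (of_nat ((?n - ?d) choose (j - h)) * (of_nat q - 1) ^ (j - h)))"
    by (simp add: coeff_mult coeff_lin_power)
  also have "\<dots> = of_real (krawtchouk ?n q j ?d)"
    by (simp add: krawtchouk_def of_real_sum algebra_simps)
  finally show ?thesis .
qed

lemma modeq_iff:
  assumes "e < q" "x < q" "y < (q::nat)"
  shows "x mod q = (e + y) mod q \<longleftrightarrow> e = (x + q - y) mod q"
proof
  assume h: "x mod q = (e + y) mod q"
  show "e = (x + q - y) mod q"
  proof (cases "e + y < q")
    case True
    then have "x = e + y" using h assms by simp
    then show ?thesis using assms by simp
  next
    case False
    then have "x = e + y - q" using h assms by (simp add: le_mod_geq)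
    then show ?thesis using assms False by simp
  qed
next
  assume h: "e = (x + q - y) mod q"
  show "x mod q = (e + y) mod q"
  proof (cases "y \<le> x")
    case True
    then have "e = x - y" using h assms by (simp add: le_mod_geq)
    then show ?thesis using assms True by simp
  next
    case False
    then have "e = x + q - y" using h assms by simp
    then show ?thesis using assms False by simp
  qed
qed

lemma ch_add:
  "ch R q e b * ch R q b y = ch R q b (\<lambda>k. e k + y k)"
  by (simp add: ch_def prod.distrib[symmetric] power_add[symmetric] algebra_simps)

lemma kraw_inv:
  assumes "finite R" "q \<ge> 1" "\<forall>i\<in>R. x i < q \<and> y i < q"
  shows "(\<Sum>b\<in>XR R q. of_real (krawtchouk (card R) q i (wt R b)) * (cnj (ch R q b x) * ch R q b y))
       = (if dR R x y = i then of_nat q ^ card R else 0)"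
proof -
  define e0 where "e0 k = (if k \<in> R then (x k + q - y k) mod q else 0)" for k
  have e0X: "e0 \<in> XR R q" using assms(2) by (auto simp: XR_def e0_def)
  have wte0: "wt R e0 = dR R x y"
  proof -
    have "{k\<in>R. e0 k \<noteq> 0} = {k\<in>R. x k \<noteq> y k}"
    proof (rule Collect_cong)
      fix k
      have "e0 k = 0 \<longleftrightarrow> x k = y k" if k: "k \<in> R"
      proof -
        have xy: "x k < q" "y k < q" using assms(3) k by auto
        have "e0 k = (x k + q - y k) mod q" using k by (simp add: e0_def)
        moreover have "x k mod q = (0 + y k) mod q \<longleftrightarrow> 0 = (x k + q - y k) mod q"
          by (rule modeq_iff) (use xy assms(2) in auto)
        moreover have "x k mod q = (0 + y k) mod q \<longleftrightarrow> x k = y k"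
          using xy by simp
        ultimately show ?thesis by auto
      qed
      then show "(k \<in> R \<and> e0 k \<noteq> 0) = (k \<in> R \<and> x k \<noteq> y k)" by auto
    qed
    then show ?thesis by (simp add: wt_def dR_def)
  qed
  have cond: "e \<in> XR R q \<Longrightarrow> (\<forall>k\<in>R. x k mod q = (e k + y k) mod q) \<longleftrightarrow> e = e0" for e
  proof -
    assume eX: "e \<in> XR R q"
    have "(\<forall>k\<in>R. x k mod q = (e k + y k) mod q) \<longleftrightarrow> (\<forall>k\<in>R. e k = e0 k)"
    proof (rule ball_cong[OF refl])
      fix k assume k: "k \<in> R"
      have ek: "e k < q" using eX k by (auto simp: XR_def)
      have "x k mod q = (e k + y k) mod q \<longleftrightarrow> e k = (x k + q - y k) mod q"
        by (rule modeq_iff) (use ek assms(3) k in auto)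
      then show "(x k mod q = (e k + y k) mod q) = (e k = e0 k)" using k by (simp add: e0_def)
    qed
    also have "\<dots> \<longleftrightarrow> e = e0"
    proof
      assume h: "\<forall>k\<in>R. e k = e0 k"
      show "e = e0"
      proof
        fix k show "e k = e0 k"
          using h eX by (cases "k \<in> R") (auto simp: XR_def e0_def)
      qed
    qed simp
    finally show ?thesis .
  qed
  have K: "of_real (krawtchouk (card R) q i (wt R b)) = (\<Sum>e\<in>XR R q. if wt R e = i then ch R q e b else 0)"
    if b: "b \<in> XR R q" for b
  proof -
    have "\<forall>k\<in>R. (\<lambda>_. 0::nat) k < q \<and> b k < q" using b assms(2) by (auto simp: XR_def)
    from kraw_char[OF assms(1,2) this, of i]
    have 1: "(\<Sum>e\<in>XR R q. if wt R e = i then cnj (ch R q e (\<lambda>_. 0)) * ch R q e b else 0)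
        = of_real (krawtchouk (card R) q i (dR R (\<lambda>_. 0) b))" .
    have 2: "dR R (\<lambda>_. 0) b = wt R b"
    proof -
      have "{i\<in>R. (0::nat) \<noteq> b i} = {i\<in>R. b i \<noteq> 0}" by auto
      then show ?thesis by (simp add: dR_def wt_def)
    qed
    have 3: "ch R q e (\<lambda>_. 0) = 1" for e by (simp add: ch_def)
    show ?thesis using 1 unfolding 2 3 complex_cnj_one mult_1_left by (rule sym)
  qed
  have "(\<Sum>b\<in>XR R q. of_real (krawtchouk (card R) q i (wt R b)) * (cnj (ch R q b x) * ch R q b y))
      = (\<Sum>b\<in>XR R q. \<Sum>e\<in>XR R q. if wt R e = i then cnj (ch R q b x) * ch R q b (\<lambda>k. e k + y k) else 0)"
  proof (rule sum.cong[OF refl])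
    fix b assume b: "b \<in> XR R q"
    have ce: "ch R q e b * (cnj (ch R q b x) * ch R q b y) = cnj (ch R q b x) * ch R q b (\<lambda>k. e k + y k)" for e
      by (metis ch_add mult.left_commute)
    show "of_real (krawtchouk (card R) q i (wt R b)) * (cnj (ch R q b x) * ch R q b y)
        = (\<Sum>e\<in>XR R q. if wt R e = i then cnj (ch R q b x) * ch R q b (\<lambda>k. e k + y k) else 0)"
      unfolding K[OF b] sum_distrib_right by (intro sum.cong refl) (simp add: ce)
  qed
  also have "\<dots> = (\<Sum>e\<in>XR R q. if wt R e = i then (\<Sum>b\<in>XR R q. cnj (ch R q b x) * ch R q b (\<lambda>k. e k + y k)) else 0)"
    by (subst sum.swap) (intro sum.cong refl, simp)
  also have "\<dots> = (\<Sum>e\<in>XR R q. if wt R e = i then (if \<forall>k\<in>R. x k mod q = (e k + y k) mod q then of_nat q ^ card R else 0) else 0)"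
    by (intro sum.cong refl) (simp only: orth_gen[OF assms(1,2)])
  also have "\<dots> = (\<Sum>e\<in>XR R q. if e = e0 then (if wt R e0 = i then of_nat q ^ card R else 0) else 0)"
  proof (rule sum.cong[OF refl])
    fix e assume e: "e \<in> XR R q"
    show "(if wt R e = i then (if \<forall>k\<in>R. x k mod q = (e k + y k) mod q then of_nat q ^ card R else 0) else 0)
        = (if e = e0 then (if wt R e0 = i then of_nat q ^ card R else (0::complex)) else 0)"
      using cond[OF e] by (cases "e = e0") auto
  qed
  also have "\<dots> = (if dR R x y = i then of_nat q ^ card R else 0)"
    using e0X finite_XR[OF assms(1)] wte0 by simp
  finally show ?thesis .
qed

definition PB :: "nat \<Rightarrow> real poly" where
  "PB h = smult (1 / fact h) (\<Prod>k<h. [:- of_nat k, 1:])"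

definition PC :: "nat \<Rightarrow> nat \<Rightarrow> real poly" where
  "PC n r = smult (1 / fact r) (\<Prod>k<r. [:of_nat n - of_nat k, -1:])"

definition KP :: "nat \<Rightarrow> nat \<Rightarrow> nat \<Rightarrow> real poly" where
  "KP n q i = (\<Sum>h\<le>i. smult ((-1) ^ h * (real q - 1) ^ (i - h)) (PB h * PC n (i - h)))"

lemma poly_PB: "poly (PB h) x = x gchoose h"
  by (simp add: PB_def poly_prod gbinomial_prod_rev atLeast0LessThan divide_inverse mult.commute)

lemma poly_PC: "poly (PC n r) x = (of_nat n - x) gchoose r"
  by (simp add: PC_def poly_prod gbinomial_prod_rev atLeast0LessThan divide_inverse mult.commute algebra_simps)

lemma poly_KP:
  assumes "j \<le> n"
  shows "poly (KP n q i) (of_nat j) = krawtchouk n q i j"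
proof -
  have "poly (KP n q i) (of_nat j) = (\<Sum>h\<le>i. (-1) ^ h * (real q - 1) ^ (i - h) * (real j gchoose h) * ((real n - real j) gchoose (i - h)))"
    by (simp add: KP_def poly_sum poly_PB poly_PC mult.assoc)
  also have "\<dots> = krawtchouk n q i j"
    unfolding krawtchouk_def using assms
    by (intro sum.cong refl) (simp add: binomial_gbinomial of_nat_diff)
  finally show ?thesis .
qed

lemma lin_prod:
  "degree (\<Prod>k<m. [:c k, d:]) \<le> m \<and> coeff (\<Prod>k<m. [:c k, d:]) m = (d::'a::comm_ring_1) ^ m"
proof (induction m)
  case 0 then show ?case by simp
next
  case (Suc m)
  let ?p = "\<Prod>k<m. [:c k, d:]"
  have eq: "(\<Prod>k<Suc m. [:c k, d:]) = [:c m, d:] * ?p"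
    by (simp add: mult.commute)
  have "degree ([:c m, d:] * ?p) \<le> Suc m"
  proof -
    have "degree ([:c m, d:] * ?p) \<le> degree [:c m, d:] + degree ?p" by (rule degree_mult_le)
    moreover have "degree [:c m, d:] \<le> 1" by simp
    ultimately show ?thesis using Suc.IH by linarith
  qed
  moreover have "coeff ([:c m, d:] * ?p) (Suc m) = d ^ Suc m"
  proof -
    have "coeff ?p (Suc m) = 0" using Suc.IH by (intro coeff_eq_0) simp
    then show ?thesis using Suc.IH by simp
  qed
  ultimately show ?case unfolding eq by simp
qed

lemma coeff_mult_top:
  assumes "degree p \<le> a" "degree q \<le> b"
  shows "coeff (p * q) (a + b) = coeff p a * coeff q b"
proof -
  have "coeff (p * q) (a + b) = (\<Sum>i\<le>a + b. coeff p i * coeff q (a + b - i))"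
    by (rule coeff_mult)
  also have "\<dots> = (\<Sum>i\<le>a + b. if i = a then coeff p a * coeff q b else 0)"
  proof (intro sum.cong refl)
    fix i assume "i \<in> {..a + b}"
    show "coeff p i * coeff q (a + b - i) = (if i = a then coeff p a * coeff q b else 0)"
    proof (cases "i < a")
      case True
      then have "coeff q (a + b - i) = 0" using assms(2) by (intro coeff_eq_0) linarith
      then show ?thesis using True by simp
    next
      case False
      show ?thesis
      proof (cases "i = a")
        case False
        then have "coeff p i = 0" using assms(1) \<open>\<not> i < a\<close> by (intro coeff_eq_0) linarith
        then show ?thesis using False by simp
      qed simp
    qed
  qed
  also have "\<dots> = coeff p a * coeff q b" by simp
  finally show ?thesis .
qed

lemma PB_deg: "degree (PB h) \<le> h" and PB_coeff: "coeff (PB h) h = 1 / fact h"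
  using lin_prod[of "\<lambda>k. - of_nat k" 1 h] unfolding PB_def
  by (auto intro: order.trans[OF degree_smult_le])

lemma PC_deg: "degree (PC n r) \<le> r" and PC_coeff: "coeff (PC n r) r = (-1) ^ r / fact r"
  using lin_prod[of "\<lambda>k. of_nat n - of_nat k" "-1" r] unfolding PC_def
  by (auto intro: order.trans[OF degree_smult_le])

lemma KP_deg: "degree (KP n q i) \<le> i"
  unfolding KP_def
proof (rule degree_sum_le)
  fix h assume h: "h \<in> {..i}"
  have "degree (PB h * PC n (i - h)) \<le> h + (i - h)"
    using degree_mult_le[of "PB h" "PC n (i - h)"] PB_deg[of h] PC_deg[of n "i - h"] by linarith
  then show "degree (smult ((-1) ^ h * (real q - 1) ^ (i - h)) (PB h * PC n (i - h))) \<le> i"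
    using h by (intro order.trans[OF degree_smult_le]) auto
qed simp

lemma KP_coeff_nz:
  assumes "q \<ge> 1"
  shows "coeff (KP n q i) i \<noteq> 0"
proof -
  have "coeff (KP n q i) i = (\<Sum>h\<le>i. (-1) ^ h * (real q - 1) ^ (i - h) * ((1 / fact h) * ((-1) ^ (i - h) / fact (i - h))))"
  proof -
    have "coeff (PB h * PC n (i - h)) i = (1 / fact h) * ((-1) ^ (i - h) / fact (i - h))" if "h \<le> i" for h
      using coeff_mult_top[OF PB_deg PC_deg, of h n "i - h"] that by (simp add: PB_coeff PC_coeff)
    then show ?thesis unfolding KP_def coeff_sum by (intro sum.cong refl) simp
  qed
  also have "\<dots> = (-1) ^ i * (\<Sum>h\<le>i. (real q - 1) ^ (i - h) / (fact h * fact (i - h)))"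
    unfolding sum_distrib_left
  proof (intro sum.cong refl)
    fix h assume "h \<in> {..i}"
    then have "(-1::real) ^ h * (-1) ^ (i - h) = (-1) ^ i" by (simp add: power_add[symmetric])
    then show "(-1) ^ h * (real q - 1) ^ (i - h) * (1 / fact h * ((-1) ^ (i - h) / fact (i - h)))
        = (-1) ^ i * ((real q - 1) ^ (i - h) / (fact h * fact (i - h)))"
      by (simp add: field_simps)
  qed
  also have "(\<Sum>h\<le>i. (real q - 1) ^ (i - h) / (fact h * fact (i - h))) > 0"
  proof -
    have "(\<Sum>h\<le>i. (real q - 1) ^ (i - h) / (fact h * fact (i - h))) \<ge> (real q - 1) ^ (i - i) / (fact i * fact (i - i))"
      using assms by (intro member_le_sum) auto
    moreover have "(real q - 1) ^ (i - i) / (fact i * fact (i - i)) > 0" by simp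
    ultimately show ?thesis by linarith
  qed
  ultimately show ?thesis by simp
qed

lemma degree_drop:
  assumes "degree (p::real poly) \<le> Suc e" "coeff p (Suc e) = 0"
  shows "degree p \<le> e"
proof (rule ccontr)
  assume "\<not> degree p \<le> e"
  then have "degree p = Suc e" using assms(1) by linarith
  then have "p = 0" using assms(2) leading_coeff_0_iff[of p] by simp
  then show False using \<open>\<not> degree p \<le> e\<close> by simp
qed

lemma kraw_span:
  assumes "q \<ge> 1"
  shows "degree (P::real poly) \<le> e \<Longrightarrow> \<exists>c. \<forall>x. poly P x = (\<Sum>i\<le>e. c i * poly (KP n q i) x)"
proof (induction e arbitrary: P)
  case 0
  have K0: "KP n q 0 = 1" by (simp add: KP_def PB_def PC_def)
  have "P = [:coeff P 0:]" using 0 degree_0_id[of P] by simp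
  then have "poly P x = coeff P 0 * poly (KP n q 0) x" for x
    by (metis K0 mult.right_neutral poly_1 poly_pCons mult_zero_right poly_0 add.right_neutral)
  then show ?case by (intro exI[of _ "\<lambda>_. coeff P 0"]) simp
next
  case (Suc e)
  define \<alpha> where "\<alpha> = coeff P (Suc e) / coeff (KP n q (Suc e)) (Suc e)"
  define P' where "P' = P - smult \<alpha> (KP n q (Suc e))"
  have "degree P' \<le> Suc e"
    unfolding P'_def using Suc.prems KP_deg[of n q "Suc e"]
    by (intro degree_diff_le) (auto intro: order.trans[OF degree_smult_le])
  moreover have "coeff P' (Suc e) = 0"
    unfolding P'_def \<alpha>_def using KP_coeff_nz[OF assms, of n "Suc e"] by simp
  ultimately have "degree P' \<le> e" by (rule degree_drop)
  then obtain c where c: "\<And>x. poly P' x = (\<Sum>i\<le>e. c i * poly (KP n q i) x)"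
    using Suc.IH by blast
  have "poly P x = (\<Sum>i\<le>Suc e. (c(Suc e := \<alpha>)) i * poly (KP n q i) x)" for x
  proof -
    have "poly P x = poly P' x + \<alpha> * poly (KP n q (Suc e)) x" by (simp add: P'_def)
    also have "\<dots> = (\<Sum>i\<le>e. (c(Suc e := \<alpha>)) i * poly (KP n q i) x) + \<alpha> * poly (KP n q (Suc e)) x"
      unfolding c by (intro arg_cong2[where f="(+)"] sum.cong refl) auto
    also have "\<dots> = (\<Sum>i\<le>Suc e. (c(Suc e := \<alpha>)) i * poly (KP n q i) x)"
      by simp
    finally show ?thesis .
  qed
  then show ?case by blast
qed

lemma ch_subset:
  assumes "R \<subseteq> U" "finite U" "b \<in> XR R q"
  shows "ch U q b y = ch R q b y"
  unfolding ch_def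
proof (rule prod.mono_neutral_right[OF assms(2,1)])
  show "\<forall>i\<in>U - R. om q ^ (b i * y i) = 1" using assms(3) by (auto simp: XR_def)
qed

lemma ch_mult_add: "ch U q a y * ch U q b y = ch U q (\<lambda>i. a i + b i) y"
  by (simp add: ch_def prod.distrib[symmetric] power_add[symmetric] algebra_simps)

lemma wt_le: "finite R \<Longrightarrow> wt R b \<le> card R"
  unfolding wt_def by (rule card_mono) auto

lemma key:
  fixes Y :: "(nat \<Rightarrow> nat) set" and P :: "real poly" and c :: "nat \<Rightarrow> real"
  assumes q: "q \<ge> 1" and YX: "Y \<subseteq> XR {..<D} q" and finY: "finite Y"
    and L5: "\<And>b. b \<in> XR {..<D} q \<Longrightarrow> wt {..<D} b \<in> {1..D} \<Longrightarrow> wt {..<D} b \<notin> T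
              \<Longrightarrow> (\<Sum>y\<in>Y. ch {..<D} q b y) = 0"
    and aX: "a \<in> XR {..<D} q" and wta: "wt {..<D} a = m"
    and hP: "\<And>\<tau>. \<tau> \<in> T \<Longrightarrow> \<tau> > m \<Longrightarrow> poly P (real (\<tau> - m)) = 0"
    and hc: "\<And>j. j \<le> D - m \<Longrightarrow> (\<Sum>i\<le>e. c i * krawtchouk (D - m) q i j) = poly P (real j)"
    and hd: "\<And>y y'. y \<in> Y \<Longrightarrow> y' \<in> Y \<Longrightarrow> y \<noteq> y' \<Longrightarrow> dR {..<D} y y' > m + e"
    and y0: "y0 \<in> Y"
  shows "of_real (c 0) * of_nat q ^ (D - m) * ch {..<D} q a y0
       = of_real (poly P 0) * (\<Sum>y\<in>Y. ch {..<D} q a y)"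
proof -
  define U where "U = {..<D}"
  define S where "S = {i\<in>U. a i \<noteq> 0}"
  define R where "R = U - S"
  define n where "n = D - m"
  have finU: "finite U" by (simp add: U_def)
  have finR: "finite R" by (simp add: R_def U_def)
  have cardS: "card S = m" using wta by (simp add: S_def wt_def U_def)
  have SU: "S \<subseteq> U" by (auto simp: S_def)
  have cardR: "card R = n"
    unfolding R_def n_def using card_Diff_subset[OF finite_subset[OF SU finU] SU] cardS
    by (simp add: U_def)
  have RU: "R \<subseteq> U" by (auto simp: R_def)
  have ySX: "\<forall>i\<in>R. y i < q" if "y \<in> Y" for y
    using that YX RU by (auto simp: XR_def U_def)
  have y0X: "\<forall>i\<in>R. y0 i < q" using ySX[OF y0] .
  define G where "G y = (\<Sum>b\<in>XR R q. complex_of_real (poly P (real (wt R b))) * (cnj (ch R q b y0) * ch R q b y))" for y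
  have GA: "G y = of_nat q ^ n * of_real (\<Sum>i\<le>e. c i * (if dR R y0 y = i then 1 else 0))" if y: "y \<in> Y" for y
  proof -
    have "G y = (\<Sum>b\<in>XR R q. \<Sum>i\<le>e. of_real (c i) * (of_real (krawtchouk n q i (wt R b)) * (cnj (ch R q b y0) * ch R q b y)))"
      unfolding G_def
    proof (intro sum.cong refl)
      fix b assume "b \<in> XR R q"
      have "wt R b \<le> n" using wt_le[OF finR, of b] cardR by simp
      then have eqP: "poly P (real (wt R b)) = (\<Sum>i\<le>e. c i * krawtchouk n q i (wt R b))"
        using hc[of "wt R b"] by (simp add: n_def)
      show "complex_of_real (poly P (real (wt R b))) * (cnj (ch R q b y0) * ch R q b y)
          = (\<Sum>i\<le>e. of_real (c i) * (of_real (krawtchouk n q i (wt R b)) * (cnj (ch R q b y0) * ch R q b y)))"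
        unfolding eqP of_real_sum sum_distrib_right of_real_mult by (intro sum.cong refl) (simp only: mult.assoc)
    qed
    also have "\<dots> = (\<Sum>i\<le>e. of_real (c i) * (\<Sum>b\<in>XR R q. of_real (krawtchouk n q i (wt R b)) * (cnj (ch R q b y0) * ch R q b y)))"
      by (subst sum.swap) (simp add: sum_distrib_left)
    also have "\<dots> = (\<Sum>i\<le>e. of_real (c i) * (if dR R y0 y = i then of_nat q ^ n else 0))"
      using kraw_inv[OF finR q, of y0 y] y0X ySX[OF y] unfolding cardR by simp
    also have "\<dots> = of_nat q ^ n * of_real (\<Sum>i\<le>e. c i * (if dR R y0 y = i then 1 else 0))"
      unfolding of_real_sum sum_distrib_left
    proof (intro sum.cong refl)
      fix i
      show "complex_of_real (c i) * (if dR R y0 y = i then of_nat q ^ n else 0)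
          = of_nat q ^ n * complex_of_real (c i * (if dR R y0 y = i then 1 else 0))"
        by (cases "dR R y0 y = i") simp_all
    qed
    finally show ?thesis .
  qed
  have Gne: "G y = 0" if y: "y \<in> Y" "y \<noteq> y0" for y
  proof -
    have "{i\<in>U. y0 i \<noteq> y i} \<subseteq> {i\<in>R. y0 i \<noteq> y i} \<union> S" by (auto simp: R_def)
    then have "dR U y0 y \<le> card ({i\<in>R. y0 i \<noteq> y i} \<union> S)"
      unfolding dR_def by (intro card_mono) (auto simp: finR finite_subset[OF SU finU])
    also have "\<dots> \<le> dR R y0 y + m"
      using card_Un_le[of "{i\<in>R. y0 i \<noteq> y i}" S] cardS unfolding dR_def by simp
    finally have "dR R y0 y > e" using hd[OF y0 y(1)] y(2) by (simp add: U_def)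
    then have "(\<Sum>i\<le>e. c i * (if dR R y0 y = i then 1 else 0)) = 0"
      by (intro sum.neutral) auto
    then show ?thesis using GA[OF y(1)] by simp
  qed
  have G0: "G y0 = of_nat q ^ n * of_real (c 0)"
  proof -
    have d0: "dR R y0 y0 = 0" by (simp add: dR_def)
    have "(\<Sum>i\<le>e. c i * (if dR R y0 y0 = i then 1 else 0)) = (\<Sum>i\<le>e. if 0 = i then c i else 0)"
      unfolding d0 by (intro sum.cong) auto
    also have "\<dots> = c 0" by simp
    finally show ?thesis using GA[OF y0] by simp
  qed
  have r0: "(\<Sum>y\<in>Y - {y0}. ch U q a y * G y) = 0"
    by (rule sum.neutral) (use Gne in auto)
  have "(\<Sum>y\<in>Y. ch U q a y * G y) = ch U q a y0 * G y0"
    unfolding sum.remove[OF finY y0, of "\<lambda>y. ch U q a y * G y"] r0 by (rule add_0_right)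
  also have "\<dots> = of_real (c 0) * of_nat q ^ n * ch U q a y0"
    unfolding G0 by (simp only: ac_simps)
  finally have A: "(\<Sum>y\<in>Y. ch U q a y * G y) = of_real (c 0) * of_nat q ^ n * ch U q a y0" .
  have bU: "b \<in> XR U q" if b: "b \<in> XR R q" for b
  proof -
    have "b i < q" if "i \<in> U" for i
      using b q by (cases "i \<in> R") (auto simp: XR_def)
    then show ?thesis using b RU by (auto simp: XR_def)
  qed
  have chRU: "ch R q b y = ch U q b y" if "b \<in> XR R q" for b y
    using ch_subset[OF RU finU that] by simp
  have abX: "(\<lambda>i. a i + b i) \<in> XR U q" if b: "b \<in> XR R q" for b
  proof -
    have "\<forall>i\<in>U. a i + b i < q"
    proof
      fix i assume i: "i \<in> U"
      show "a i + b i < q"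
      proof (cases "i \<in> S")
        case True then have "b i = 0" using b by (auto simp: XR_def R_def)
        then show ?thesis using aX i by (auto simp: XR_def U_def)
      next
        case False then have "a i = 0" using i by (simp add: S_def)
        then show ?thesis using b i False by (auto simp: XR_def R_def)
      qed
    qed
    moreover have "\<forall>i. i \<notin> U \<longrightarrow> a i + b i = 0"
      using aX b RU by (auto simp: XR_def U_def)
    ultimately show ?thesis by (simp add: XR_def)
  qed
  have wtab: "wt U (\<lambda>i. a i + b i) = m + wt R b" if b: "b \<in> XR R q" for b
  proof -
    have e1: "{i\<in>U. a i + b i \<noteq> 0} = S \<union> {i\<in>R. b i \<noteq> 0}"
      using b by (auto simp: S_def R_def XR_def)
    have e2: "S \<inter> {i\<in>R. b i \<noteq> 0} = {}" by (auto simp: R_def)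
    have "card (S \<union> {i\<in>R. b i \<noteq> 0}) = card S + card {i\<in>R. b i \<noteq> 0}"
      by (rule card_Un_disjoint) (use finR finite_subset[OF SU finU] e2 in auto)
    then show ?thesis unfolding wt_def e1 cardS .
  qed
  have tm: "complex_of_real (poly P (real (wt R b))) * cnj (ch R q b y0) * (\<Sum>y\<in>Y. ch U q (\<lambda>i. a i + b i) y)
      = (if b = (\<lambda>_. 0) then of_real (poly P 0) * (\<Sum>y\<in>Y. ch U q a y) else 0)" if b: "b \<in> XR R q" for b
  proof (cases "b = (\<lambda>_. 0)")
    case True
    have "wt R b = 0" using True by (simp add: wt_def)
    moreover have "ch R q b y0 = 1" using True by (simp add: ch_def)
    moreover have "(\<lambda>i. a i + b i) = a" using True by simp
    ultimately show ?thesis using True by simp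
  next
    case False
    then obtain i where "b i \<noteq> 0" by auto
    then have "i \<in> R" using b by (auto simp: XR_def)
    then have "{k\<in>R. b k \<noteq> 0} \<noteq> {}" using \<open>b i \<noteq> 0\<close> by auto
    moreover have "finite {k\<in>R. b k \<noteq> 0}" using finR by simp
    ultimately have "0 < card {k\<in>R. b k \<noteq> 0}" by (simp add: card_gt_0_iff)
    then have w1: "wt R b \<ge> 1" unfolding wt_def by simp
    have "wt U (\<lambda>i. a i + b i) \<le> D" using wt_le[OF finU, of "\<lambda>i. a i + b i"] by (simp add: U_def)
    then have range: "m + wt R b \<in> {1..D}" using wtab[OF b] w1 by auto
    show ?thesis
    proof (cases "m + wt R b \<in> T")
      case True
      have "poly P (real (m + wt R b - m)) = 0" by (rule hP) (use True w1 in auto)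
      then show ?thesis using False by simp
    next
      case notT: False
      have wt': "wt {..<D} (\<lambda>i. a i + b i) = m + wt R b" using wtab[OF b] by (simp add: U_def)
      have "(\<Sum>y\<in>Y. ch {..<D} q (\<lambda>i. a i + b i) y) = 0"
        by (rule L5[OF abX[OF b, unfolded U_def]]) (use wt' range notT in auto)
      then show ?thesis using False unfolding U_def by simp
    qed
  qed
  have "(\<Sum>y\<in>Y. ch U q a y * G y)
      = (\<Sum>b\<in>XR R q. complex_of_real (poly P (real (wt R b))) * cnj (ch R q b y0) * (\<Sum>y\<in>Y. ch U q (\<lambda>i. a i + b i) y))"
  proof -
    have "(\<Sum>y\<in>Y. ch U q a y * G y)
        = (\<Sum>y\<in>Y. \<Sum>b\<in>XR R q. complex_of_real (poly P (real (wt R b))) * cnj (ch R q b y0) * (ch U q a y * ch R q b y))"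
      unfolding G_def sum_distrib_left by (intro sum.cong refl) (simp only: ac_simps)
    also have "\<dots> = (\<Sum>b\<in>XR R q. \<Sum>y\<in>Y. complex_of_real (poly P (real (wt R b))) * cnj (ch R q b y0) * (ch U q a y * ch R q b y))"
      by (rule sum.swap)
    also have "\<dots> = (\<Sum>b\<in>XR R q. \<Sum>y\<in>Y. complex_of_real (poly P (real (wt R b))) * cnj (ch R q b y0) * ch U q (\<lambda>i. a i + b i) y)"
    proof (intro sum.cong refl)
      fix b y assume b: "b \<in> XR R q"
      have "ch U q a y * ch R q b y = ch U q (\<lambda>i. a i + b i) y"
        using chRU[OF b] ch_mult_add by metis
      then show "complex_of_real (poly P (real (wt R b))) * cnj (ch R q b y0) * (ch U q a y * ch R q b y)
          = complex_of_real (poly P (real (wt R b))) * cnj (ch R q b y0) * ch U q (\<lambda>i. a i + b i) y"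
        by (simp only:)
    qed
    finally show ?thesis by (simp only: sum_distrib_left)
  qed
  also have "\<dots> = (\<Sum>b\<in>XR R q. if b = (\<lambda>_. 0) then of_real (poly P 0) * (\<Sum>y\<in>Y. ch U q a y) else 0)"
    by (intro sum.cong refl) (rule tm)
  also have "\<dots> = of_real (poly P 0) * (\<Sum>y\<in>Y. ch U q a y)"
  proof -
    have "(\<lambda>_. 0) \<in> XR R q" using q by (simp add: XR_def)
    then show ?thesis using finite_XR[OF finR] by simp
  qed
  finally have B: "(\<Sum>y\<in>Y. ch U q a y * G y) = of_real (poly P 0) * (\<Sum>y\<in>Y. ch U q a y)" .
  show ?thesis using trans[OF A[symmetric] B] unfolding U_def n_def .
qed

lemma dot_ind:
  fixes z :: "nat \<Rightarrow> nat" and v :: nat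
  assumes "finite U" "i \<in> U" "i \<notin> R0" "R0 \<subseteq> U"
  shows "(\<Sum>k\<in>U. ((\<lambda>k. if k \<in> R0 then 1 else 0)(i := v)) k * z k) = v * z i + (\<Sum>k\<in>R0. z k)"
proof -
  have "(\<Sum>k\<in>U. ((\<lambda>k. if k \<in> R0 then 1 else 0)(i := v)) k * z k)
      = v * z i + (\<Sum>k\<in>U - {i}. ((\<lambda>k. if k \<in> R0 then 1 else 0)(i := v)) k * z k)"
    by (subst sum.remove[OF assms(1,2)]) simp
  also have "(\<Sum>k\<in>U - {i}. ((\<lambda>k. if k \<in> R0 then 1 else 0)(i := v)) k * z k)
      = (\<Sum>k\<in>U - {i}. if k \<in> R0 then z k else 0)"
    by (intro sum.cong refl) auto
  also have "\<dots> = (\<Sum>k\<in>{k\<in>U - {i}. k \<in> R0}. z k)"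
  proof -
    have "finite (U - {i})" using assms(1) by simp
    then show ?thesis by (simp only: sum.inter_filter)
  qed
  also have "{k\<in>U - {i}. k \<in> R0} = R0" using assms by auto
  finally show ?thesis .
qed

lemma ind_X:
  assumes "i < D" "R0 \<subseteq> {..<D}" "v < q" "1 < q"
  shows "((\<lambda>k. if k \<in> R0 then 1 else 0)(i := v)) \<in> XR {..<D} q"
  using assms by (auto simp: XR_def)

lemma ind_wt:
  assumes "i < D" "R0 \<subseteq> {..<D}" "i \<notin> R0" "v \<noteq> 0" "finite R0"
  shows "wt {..<D} ((\<lambda>k. if k \<in> R0 then 1 else 0)(i := v)) = Suc (card R0)"
proof -
  have "{k\<in>{..<D}. ((\<lambda>k. if k \<in> R0 then 1 else (0::nat))(i := v)) k \<noteq> 0} = insert i R0"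
    using assms by auto
  then show ?thesis using assms by (simp add: wt_def)
qed

lemma ch_pow: "ch {..<D} q a y = om q ^ (\<Sum>k<D. a k * y k)"
  by (simp add: ch_def power_sum)

lemma fin_struct:
  assumes q: "q \<ge> 2" and m: "1 \<le> m" "m < D"
    and yX: "y \<in> XR {..<D} q" and y'X: "y' \<in> XR {..<D} q" and ne: "y \<noteq> y'"
    and H: "\<And>a. a \<in> XR {..<D} q \<Longrightarrow> wt {..<D} a = m \<Longrightarrow> ch {..<D} q a y = ch {..<D} q a y'"
  shows "q = 2 \<and> hdist D y y' = D"
proof -
  define ind where "ind R0 v i = ((\<lambda>k. if k \<in> R0 then 1 else 0)(i := v))" for R0 :: "nat set" and v i :: nat
  have dvd: "int q dvd (int v * (int (y i) - int (y' i)) + ((\<Sum>k\<in>R0. int (y k)) - (\<Sum>k\<in>R0. int (y' k))))"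
    if i: "i < D" and R0: "R0 \<subseteq> {..<D} - {i}" "card R0 = m - 1" and v: "v < q" "v \<noteq> 0" for i R0 v
  proof -
    have finR0: "finite R0" using R0(1) finite_subset by blast
    have aX: "ind R0 v i \<in> XR {..<D} q"
      unfolding ind_def by (rule ind_X) (use i R0 v q in auto)
    have "wt {..<D} (ind R0 v i) = Suc (card R0)"
      unfolding ind_def by (rule ind_wt) (use i R0 v finR0 in auto)
    then have "wt {..<D} (ind R0 v i) = m" using R0(2) m by simp
    from H[OF aX this] have "om q ^ (\<Sum>k<D. ind R0 v i k * y k) = om q ^ (\<Sum>k<D. ind R0 v i k * y' k)"
      by (simp add: ch_pow)
    then have "(\<Sum>k<D. ind R0 v i k * y k) mod q = (\<Sum>k<D. ind R0 v i k * y' k) mod q"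
      using om_pow_eq q by simp
    moreover have "(\<Sum>k<D. ind R0 v i k * z k) = v * z i + (\<Sum>k\<in>R0. z k)" for z
      unfolding ind_def by (rule dot_ind) (use i R0 in auto)
    ultimately have "(v * y i + (\<Sum>k\<in>R0. y k)) mod q = (v * y' i + (\<Sum>k\<in>R0. y' k)) mod q" by simp
    then have "int (v * y i + (\<Sum>k\<in>R0. y k)) mod int q = int (v * y' i + (\<Sum>k\<in>R0. y' k)) mod int q"
      by (metis of_nat_mod)
    then have "int q dvd (int (v * y i + (\<Sum>k\<in>R0. y k)) - int (v * y' i + (\<Sum>k\<in>R0. y' k)))"
      by (simp add: mod_eq_dvd_iff)
    then show ?thesis by (simp add: algebra_simps)
  qed
  obtain i where i: "i < D" "y i \<noteq> y' i"
  proof -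
    obtain k where "y k \<noteq> y' k" using ne by auto
    moreover have "k < D" using calculation yX y'X by (auto simp: XR_def) (metis not_le)
    ultimately show ?thesis using that by blast
  qed
  have yq: "\<And>k. k < D \<Longrightarrow> y k < q" "\<And>k. k < D \<Longrightarrow> y' k < q" using yX y'X by (auto simp: XR_def)
  have cardDi: "card ({..<D} - {i}) = D - 1" using i by simp
  have q2: "q = 2"
  proof (rule ccontr)
    assume "q \<noteq> 2"
    then have q3: "q \<ge> 3" using q by simp
    have "m - 1 \<le> card ({..<D} - {i})" using cardDi m by simp
    then obtain R0 where R0: "R0 \<subseteq> {..<D} - {i}" "card R0 = m - 1"
      using obtain_subset_with_card_n[of "m - 1" "{..<D} - {i}"] by blast
    have d1: "int q dvd (1 * (int (y i) - int (y' i)) + ((\<Sum>k\<in>R0. int (y k)) - (\<Sum>k\<in>R0. int (y' k))))"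
      using dvd[OF i(1) R0, of 1] q by simp
    have d2: "int q dvd (2 * (int (y i) - int (y' i)) + ((\<Sum>k\<in>R0. int (y k)) - (\<Sum>k\<in>R0. int (y' k))))"
      using dvd[OF i(1) R0, of 2] q3 by simp
    have "int q dvd (int (y i) - int (y' i))"
      using dvd_diff[OF d2 d1] by (simp add: algebra_simps)
    moreover have "int (y i) - int (y' i) \<noteq> 0" using i by simp
    ultimately have "\<bar>int q\<bar> \<le> \<bar>int (y i) - int (y' i)\<bar>" by (rule dvd_imp_le_int[rotated])
    moreover have "\<bar>int (y i) - int (y' i)\<bar> < int q"
    proof -
      have "y i < q" "y' i < q" using yq i(1) by auto
      then show ?thesis by (auto simp: abs_less_iff)
    qed
    ultimately show False by simp
  qed
  have all: "y j \<noteq> y' j" if j: "j < D" for j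
  proof (cases "j = i")
    case True then show ?thesis using i by simp
  next
    case False
    have cardDij: "card ({..<D} - {i, j}) = D - 2" using i j False by (simp add: card_Diff_subset)
    have "m - 1 \<le> card ({..<D} - {i, j})" using cardDij m by simp
    then obtain R0 where R0: "R0 \<subseteq> {..<D} - {i, j}" "card R0 = m - 1"
      using obtain_subset_with_card_n[of "m - 1" "{..<D} - {i, j}"] by blast
    have R0i: "R0 \<subseteq> {..<D} - {i}" "R0 \<subseteq> {..<D} - {j}" using R0 by auto
    have d1: "int q dvd (1 * (int (y i) - int (y' i)) + ((\<Sum>k\<in>R0. int (y k)) - (\<Sum>k\<in>R0. int (y' k))))"
      using dvd[OF i(1) R0i(1) R0(2), of 1] q by simp
    have d2: "int q dvd (1 * (int (y j) - int (y' j)) + ((\<Sum>k\<in>R0. int (y k)) - (\<Sum>k\<in>R0. int (y' k))))"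
      using dvd[OF j R0i(2) R0(2), of 1] q by simp
    have "(2::int) dvd ((int (y i) - int (y' i)) - (int (y j) - int (y' j)))"
      using dvd_diff[OF d1 d2] q2 by (simp add: algebra_simps)
    moreover have "y i < 2" "y' i < 2" "y j < 2" "y' j < 2" using yq i j q2 by auto
    ultimately show ?thesis using i(2) by presburger
  qed
  have "{k. k < D \<and> y k \<noteq> y' k} = {..<D}" using all by auto
  then show ?thesis using q2 by (simp add: hdist_def)
qed

lemma hdist_dR: "hdist D u v = dR {..<D} u v"
  by (simp add: hdist_def dR_def lessThan_def)

lemma hdist_le: "hdist D u v \<le> D"
  unfolding hdist_dR dR_def by (rule order.trans[OF card_mono[of "{..<D}"]]) auto

lemma Echi_eq:
  assumes q: "q \<ge> 1" and YX: "Y \<subseteq> XR {..<D} q" and finY: "finite Y" and u: "u \<in> XR {..<D} q"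
  shows "complex_of_real (Echi D q Y j u) * of_nat q ^ D
       = (\<Sum>b\<in>XR {..<D} q. if wt {..<D} b = j then cnj (ch {..<D} q b u) * (\<Sum>y\<in>Y. ch {..<D} q b y) else 0)"
proof -
  have pe: "prim_idem D q j u y * real q ^ D = krawtchouk D q j (hdist D u y)" for y
  proof -
    have "(\<Sum>i\<le>D. krawtchouk D q j i * assoc_mat D i u y) = (\<Sum>i\<le>D. if hdist D u y = i then krawtchouk D q j i else 0)"
      by (intro sum.cong refl) (simp add: assoc_mat_def)
    also have "\<dots> = krawtchouk D q j (hdist D u y)" using hdist_le[of D u y] by simp
    finally show ?thesis using q by (simp add: prim_idem_def)
  qed
  have "Echi D q Y j u * real q ^ D = (\<Sum>y\<in>Y. krawtchouk D q j (dR {..<D} u y))"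
    unfolding Echi_def sum_distrib_right pe hdist_dR ..
  then have "complex_of_real (Echi D q Y j u) * of_nat q ^ D = (\<Sum>y\<in>Y. complex_of_real (krawtchouk D q j (dR {..<D} u y)))"
    by (metis of_real_mult of_real_of_nat_eq of_real_power of_real_sum)
  also have "\<dots> = (\<Sum>y\<in>Y. \<Sum>b\<in>XR {..<D} q. if wt {..<D} b = j then cnj (ch {..<D} q b u) * ch {..<D} q b y else 0)"
  proof (intro sum.cong refl)
    fix y assume y: "y \<in> Y"
    have "\<forall>i\<in>{..<D}. u i < q \<and> y i < q" using u y YX by (auto simp: XR_def)
    from kraw_char[OF _ q this, of j] show "complex_of_real (krawtchouk D q j (dR {..<D} u y))
        = (\<Sum>b\<in>XR {..<D} q. if wt {..<D} b = j then cnj (ch {..<D} q b u) * ch {..<D} q b y else 0)"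
      by simp
  qed
  also have "\<dots> = (\<Sum>b\<in>XR {..<D} q. \<Sum>y\<in>Y. if wt {..<D} b = j then cnj (ch {..<D} q b u) * ch {..<D} q b y else 0)"
    by (rule sum.swap)
  also have "\<dots> = (\<Sum>b\<in>XR {..<D} q. if wt {..<D} b = j then cnj (ch {..<D} q b u) * (\<Sum>y\<in>Y. ch {..<D} q b y) else 0)"
    by (intro sum.cong refl) (simp add: sum_distrib_left)
  finally show ?thesis .
qed

lemma L5lem:
  assumes q: "q \<ge> 1" and YX: "Y \<subseteq> XR {..<D} q" and finY: "finite Y"
    and b0: "b0 \<in> XR {..<D} q" and wb: "wt {..<D} b0 = j" and j: "j \<in> {1..D}" and nT: "j \<notin> dual_support D q Y"
  shows "(\<Sum>y\<in>Y. ch {..<D} q b0 y) = 0"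
proof -
  define F where "F b = (\<Sum>y\<in>Y. ch {..<D} q b y)" for b
  have HX: "hamming_space D q = XR {..<D} q" by (auto simp: hamming_space_def XR_def)
  have E0: "Echi D q Y j u = 0" if "u \<in> XR {..<D} q" for u
    using nT j that HX by (auto simp: dual_support_def)
  have S0: "(\<Sum>b\<in>XR {..<D} q. if wt {..<D} b = j then cnj (ch {..<D} q b u) * F b else 0) = 0"
    if u: "u \<in> XR {..<D} q" for u
    using Echi_eq[OF q YX finY u, of j] E0[OF u] unfolding F_def by simp
  have "0 = (\<Sum>u\<in>XR {..<D} q. ch {..<D} q b0 u * (\<Sum>b\<in>XR {..<D} q. if wt {..<D} b = j then cnj (ch {..<D} q b u) * F b else 0))"
    by (simp add: S0)
  also have "\<dots> = (\<Sum>u\<in>XR {..<D} q. \<Sum>b\<in>XR {..<D} q. if wt {..<D} b = j then F b * (cnj (ch {..<D} q b u) * ch {..<D} q b0 u) else 0)"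
    unfolding sum_distrib_left by (intro sum.cong refl) (simp add: ac_simps)
  also have "\<dots> = (\<Sum>b\<in>XR {..<D} q. if wt {..<D} b = j then F b * (\<Sum>u\<in>XR {..<D} q. cnj (ch {..<D} q b u) * ch {..<D} q b0 u) else 0)"
    by (subst sum.swap) (intro sum.cong refl, simp add: sum_distrib_left)
  also have "\<dots> = (\<Sum>b\<in>XR {..<D} q. if b = b0 then F b0 * of_nat q ^ D else 0)"
  proof (intro sum.cong refl)
    fix b assume b: "b \<in> XR {..<D} q"
    show "(if wt {..<D} b = j then F b * (\<Sum>u\<in>XR {..<D} q. cnj (ch {..<D} q b u) * ch {..<D} q b0 u) else 0)
        = (if b = b0 then F b0 * of_nat q ^ D else 0)"
      using orth[OF _ q b b0] wb by auto
  qed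
  also have "\<dots> = F b0 * of_nat q ^ D" using b0 finite_XR[of "{..<D}" q] by simp
  finally show ?thesis using q by (simp add: F_def)
qed

lemma L6lem:
  assumes q: "q \<ge> 1" and YX: "Y \<subseteq> XR {..<D} q" and finY: "finite Y"
    and jT: "j \<in> dual_support D q Y"
  shows "\<exists>b\<in>XR {..<D} q. wt {..<D} b = j \<and> (\<Sum>y\<in>Y. ch {..<D} q b y) \<noteq> 0"
proof -
  have HX: "hamming_space D q = XR {..<D} q" by (auto simp: hamming_space_def XR_def)
  obtain u where u: "u \<in> XR {..<D} q" and E: "Echi D q Y j u \<noteq> 0"
    using jT HX by (auto simp: dual_support_def)
  have "(\<Sum>b\<in>XR {..<D} q. if wt {..<D} b = j then cnj (ch {..<D} q b u) * (\<Sum>y\<in>Y. ch {..<D} q b y) else 0) \<noteq> 0"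
  proof -
    have "complex_of_real (Echi D q Y j u) * of_nat q ^ D \<noteq> 0" using E q by simp
    then show ?thesis using Echi_eq[OF q YX finY u, of j] by simp
  qed
  then obtain b where "b \<in> XR {..<D} q"
    "(if wt {..<D} b = j then cnj (ch {..<D} q b u) * (\<Sum>y\<in>Y. ch {..<D} q b y) else 0) \<noteq> 0"
    by (rule sum.not_neutral_contains_not_neutral)
  then show ?thesis by (auto split: if_splits)
qed

lemma wt_pos:
  assumes "b \<in> XR {..<D} q" "b \<noteq> (\<lambda>_. 0)"
  shows "wt {..<D} b \<in> {1..D}"
proof -
  obtain k where k: "b k \<noteq> 0" using assms(2) by auto
  have "k < D"
  proof (rule ccontr)
    assume "\<not> k < D"
    then show False using assms(1) k by (simp add: XR_def)
  qed
  then have ne: "{i\<in>{..<D}. b i \<noteq> 0} \<noteq> {}" using k by auto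
  have fin: "finite {i\<in>{..<D}. b i \<noteq> 0}" by simp
  have "0 < card {i\<in>{..<D}. b i \<noteq> 0}" using ne fin by (simp add: card_gt_0_iff)
  then have "wt {..<D} b \<ge> 1" unfolding wt_def by simp
  moreover have "wt {..<D} b \<le> D" using wt_le[of "{..<D}" b] by simp
  ultimately show ?thesis by simp
qed

lemma Tne_lem:
  assumes q: "q \<ge> 1" and YX: "Y \<subseteq> XR {..<D} q" and finY: "finite Y" and y1: "y1 \<in> Y"
    and cY: "card Y < q ^ D"
  shows "dual_support D q Y \<noteq> {}"
proof
  assume T0: "dual_support D q Y = {}"
  define F where "F b = (\<Sum>y\<in>Y. ch {..<D} q b y)" for b
  have Fz: "F b = 0" if "b \<in> XR {..<D} q" "b \<noteq> (\<lambda>_. 0)" for b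
    unfolding F_def by (rule L5lem[OF q YX finY that(1) refl wt_pos[OF that]]) (simp add: T0)
  have y1X: "y1 \<in> XR {..<D} q" using y1 YX by auto
  have zX: "(\<lambda>_. 0) \<in> XR {..<D} q" using q by (simp add: XR_def)
  have "(\<Sum>b\<in>XR {..<D} q. cnj (ch {..<D} q b y1) * F b) = (\<Sum>b\<in>XR {..<D} q. if b = (\<lambda>_. 0) then F (\<lambda>_. 0) else 0)"
    by (intro sum.cong refl) (auto simp: Fz ch_zero)
  also have "\<dots> = F (\<lambda>_. 0)" using zX finite_XR[of "{..<D}" q] by simp
  also have "\<dots> = of_nat (card Y)" by (simp add: F_def ch_zero)
  finally have 1: "(\<Sum>b\<in>XR {..<D} q. cnj (ch {..<D} q b y1) * F b) = of_nat (card Y)" .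
  have "(\<Sum>b\<in>XR {..<D} q. cnj (ch {..<D} q b y1) * F b) = (\<Sum>y\<in>Y. \<Sum>b\<in>XR {..<D} q. cnj (ch {..<D} q b y1) * ch {..<D} q b y)"
    unfolding F_def sum_distrib_left by (rule sum.swap)
  also have "\<dots> = (\<Sum>y\<in>Y. if y = y1 then of_nat q ^ D else 0)"
  proof (intro sum.cong refl)
    fix y assume y: "y \<in> Y"
    then have yX: "y \<in> XR {..<D} q" using YX by auto
    show "(\<Sum>b\<in>XR {..<D} q. cnj (ch {..<D} q b y1) * ch {..<D} q b y) = (if y = y1 then of_nat q ^ D else 0)"
      using orth_gen[OF _ q, of "{..<D}" y1 y] XR_eq_iff[OF y1X yX] by auto
  qed
  also have "\<dots> = of_nat q ^ D" using y1 finY by simp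
  finally have "of_nat (card Y) = (of_nat q ^ D :: complex)" using 1 by simp
  then have "card Y = q ^ D" by (metis of_nat_eq_iff of_nat_power)
  then show False using cY by simp
qed

lemma min_dist_le:
  assumes YX: "Y \<subseteq> XR {..<D} q" and finY: "finite Y" and y: "y \<in> Y" "y' \<in> Y" "y \<noteq> y'"
  shows "min_dist D Y \<le> hdist D y y'"
proof -
  let ?d = "hdist D y y'"
  obtain k where k: "y k \<noteq> y' k" using y(3) by auto
  have "k < D"
  proof (rule ccontr)
    assume "\<not> k < D"
    moreover have "y \<in> XR {..<D} q" "y' \<in> XR {..<D} q" using y YX by auto
    ultimately show False using k by (simp add: XR_def)
  qed
  then have ne: "{i. i < D \<and> y i \<noteq> y' i} \<noteq> {}" using k by auto
  have fin: "finite {i. i < D \<and> y i \<noteq> y' i}" by simp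
  have "0 < card {i. i < D \<and> y i \<noteq> y' i}" using ne fin by (simp add: card_gt_0_iff)
  then have d1: "?d \<ge> 1" unfolding hdist_def by simp
  have "quad_A D Y ?d \<ge> assoc_mat D ?d y y'"
  proof -
    have "assoc_mat D ?d y y' \<le> (\<Sum>z\<in>Y. assoc_mat D ?d y z)"
      using finY y by (intro member_le_sum) (auto simp: assoc_mat_def)
    also have "\<dots> \<le> (\<Sum>x\<in>Y. \<Sum>z\<in>Y. assoc_mat D ?d x z)"
      using finY y by (intro member_le_sum[where f="\<lambda>x. \<Sum>z\<in>Y. assoc_mat D ?d x z"] sum_nonneg) (auto simp: assoc_mat_def)
    finally show ?thesis by (simp add: quad_A_def)
  qed
  then have "quad_A D Y ?d \<noteq> 0" by (simp add: assoc_mat_def)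
  then have "?d \<in> {i \<in> {1..D}. quad_A D Y i \<noteq> 0}" using d1 hdist_le[of D y y'] by simp
  then show ?thesis unfolding min_dist_def by (intro Min_le) auto
qed

lemma binary_compl:
  assumes "y \<in> XR {..<D} 2" "z \<in> XR {..<D} 2" "w \<in> XR {..<D} 2"
    and "hdist D y z = D" "hdist D y w = D"
  shows "z = w"
proof -
  have all: "y k \<noteq> v k" if "hdist D y v = D" "k < D" for v k
  proof -
    have sub: "{k. k < D \<and> y k \<noteq> v k} \<subseteq> {..<D}" by auto
    have "card {k. k < D \<and> y k \<noteq> v k} = card {..<D}" using that(1) by (simp add: hdist_def)
    from card_subset_eq[OF finite_lessThan sub this] have "{k. k < D \<and> y k \<noteq> v k} = {..<D}" .
    then have "k \<in> {k. k < D \<and> y k \<noteq> v k}" using that(2) by simp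
    then show ?thesis by simp
  qed
  show ?thesis
  proof
    fix k show "z k = w k"
    proof (cases "k < D")
      case True
      have a: "y k \<noteq> z k" "y k \<noteq> w k" using all[OF assms(4) True] all[OF assms(5) True] by auto
      have b: "y k < 2" "z k < 2" "w k < 2" using assms(1-3) True by (auto simp: XR_def)
      show ?thesis
      proof (cases "y k = 0")
        case True then show ?thesis using a b by simp
      next
        case False then have "y k = 1" using b by simp
        then show ?thesis using a b by simp
      qed
    next
      case False then show ?thesis using assms(2,3) by (auto simp: XR_def)
    qed
  qed
qed

theorem mainTheorem11:
  fixes D q :: nat and Y :: "(nat \<Rightarrow> nat) set"
  assumes "D \<ge> 3" and "q \<ge> 2"
    and "Y \<subseteq> hamming_space D q"
    and "1 < card Y" and "card Y < q ^ D"
    and "\<not> (q = 2 \<and> (\<exists>u v. Y = {u, v} \<and> hdist D u v = D))"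
  shows "min_dist D Y \<le> dual_dist D q Y + dual_degree D q Y - 1"
proof (rule ccontr)
  assume neg: "\<not> min_dist D Y \<le> dual_dist D q Y + dual_degree D q Y - 1"
  have q1: "q \<ge> 1" using assms(2) by simp
  have HX: "hamming_space D q = XR {..<D} q" by (auto simp: hamming_space_def XR_def)
  have YX: "Y \<subseteq> XR {..<D} q" using assms(3) HX by simp
  have finY: "finite Y" using assms(4) by (intro card_ge_0_finite) simp
  obtain y1 y2 where y12: "y1 \<in> Y" "y2 \<in> Y" "y1 \<noteq> y2"
  proof -
    have "\<not> card Y \<le> Suc 0" using assms(4) by simp
    then have "\<not> (\<forall>a\<in>Y. \<forall>b\<in>Y. a = b)" using card_le_Suc0_iff_eq[OF finY] by simp
    then show ?thesis using that by blast
  qed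
  define T where "T = dual_support D q Y"
  have T1D: "T \<subseteq> {1..D}" by (auto simp: T_def dual_support_def)
  have finT: "finite T" using finite_subset[OF T1D] by simp
  have Tne: "T \<noteq> {}" unfolding T_def by (rule Tne_lem[OF q1 YX finY y12(1) assms(5)])
  define m where "m = Min T"
  define s where "s = card T"
  have mT: "m \<in> T" using Min_in[OF finT Tne] by (simp add: m_def)
  have m_le: "m \<le> \<tau>" if "\<tau> \<in> T" for \<tau> using Min_le[OF finT that] by (simp add: m_def)
  have m1: "m \<ge> 1" using mT T1D by auto
  have s1: "s \<ge> 1" using finT Tne by (simp add: s_def card_gt_0_iff Suc_le_eq)
  have dd: "dual_dist D q Y = m" "dual_degree D q Y = s"
    by (simp_all add: dual_dist_def dual_degree_def m_def s_def T_def)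
  have far: "dR {..<D} y y' > m + (s - 1)" if "y \<in> Y" "y' \<in> Y" "y \<noteq> y'" for y y'
  proof -
    have "min_dist D Y \<le> hdist D y y'" by (rule min_dist_le[OF YX finY that])
    then show ?thesis using neg dd s1 by (simp add: hdist_dR)
  qed
  have mD: "m < D"
  proof -
    have "dR {..<D} y1 y2 \<le> D" using hdist_le[of D y1 y2] by (simp add: hdist_dR)
    then show ?thesis using far[OF y12] s1 by simp
  qed
  define W where "W = (\<lambda>\<tau>. \<tau> - m) ` (T - {m})"
  have finW: "finite W" using finT by (simp add: W_def)
  have cardW: "card W = s - 1"
  proof -
    have "inj_on (\<lambda>\<tau>. \<tau> - m) (T - {m})"
    proof (rule inj_onI)
      fix x y assume "x \<in> T - {m}" "y \<in> T - {m}" "x - m = y - m"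
      then show "x = y" using m_le[of x] m_le[of y] by simp
    qed
    then have "card W = card (T - {m})" by (simp add: W_def card_image)
    then show ?thesis using mT finT by (simp add: s_def)
  qed
  have Wpos: "w \<noteq> 0" if "w \<in> W" for w
  proof -
    from that obtain \<tau> where t0: "\<tau> \<in> T - {m}" "w = \<tau> - m" unfolding W_def by blast
    then have t: "\<tau> \<in> T" "\<tau> \<noteq> m" "w = \<tau> - m" by auto
    then have "m \<le> \<tau>" using m_le by simp
    then show ?thesis using t by simp
  qed
  define P :: "real poly" where "P = (\<Prod>w\<in>W. [:- real w, 1:])"
  have degP: "degree P \<le> s - 1"
  proof -
    have "degree P \<le> (\<Sum>w\<in>W. degree [:- real w, 1:])"
      unfolding P_def using degree_prod_sum_le[OF finW, of "\<lambda>w. [:- real w, 1:]"] by (simp add: comp_def)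
    also have "\<dots> = card W" by simp
    finally show ?thesis using cardW by simp
  qed
  obtain c where c: "\<And>x. poly P x = (\<Sum>i\<le>s - 1. c i * poly (KP (D - m) q i) x)"
    using kraw_span[OF q1 degP, of "D - m"] by blast
  have hc: "(\<Sum>i\<le>s - 1. c i * krawtchouk (D - m) q i j) = poly P (real j)" if "j \<le> D - m" for j
    using c[of "real j"] poly_KP[OF that, of q] by simp
  have hP: "poly P (real (\<tau> - m)) = 0" if "\<tau> \<in> T" "\<tau> > m" for \<tau>
  proof -
    have "\<tau> - m \<in> W" using that by (auto simp: W_def)
    then show ?thesis unfolding P_def poly_prod using finW
      by (intro prod_zero) (auto intro!: bexI[of _ "\<tau> - m"])
  qed
  have W0: "0 \<notin> W" using Wpos by blast
  have P0: "poly P 0 \<noteq> 0"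
    unfolding P_def poly_prod using finW W0 by simp
  have L5': "(\<Sum>y\<in>Y. ch {..<D} q b y) = 0"
    if "b \<in> XR {..<D} q" "wt {..<D} b \<in> {1..D}" "wt {..<D} b \<notin> T" for b
    using L5lem[OF q1 YX finY that(1) refl that(2)] that(3) by (simp add: T_def)
  have keyI: "of_real (c 0) * of_nat q ^ (D - m) * ch {..<D} q a y0
       = of_real (poly P 0) * (\<Sum>y\<in>Y. ch {..<D} q a y)"
    if "a \<in> XR {..<D} q" "wt {..<D} a = m" "y0 \<in> Y" for a y0
    by (rule key[OF q1 YX finY L5' that(1,2) hP hc far that(3)])
  obtain astar where astar: "astar \<in> XR {..<D} q" "wt {..<D} astar = m" "(\<Sum>y\<in>Y. ch {..<D} q astar y) \<noteq> 0"
    using L6lem[OF q1 YX finY, of m] mT by (auto simp: T_def)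
  have c0: "complex_of_real (c 0) * of_nat q ^ (D - m) \<noteq> 0"
  proof
    assume z: "complex_of_real (c 0) * of_nat q ^ (D - m) = 0"
    have "of_real (poly P 0) * (\<Sum>y\<in>Y. ch {..<D} q astar y)
        = complex_of_real (c 0) * of_nat q ^ (D - m) * ch {..<D} q astar y1"
      using keyI[OF astar(1,2) y12(1)] by (rule sym)
    also have "\<dots> = 0" using z by simp
    finally have "of_real (poly P 0) * (\<Sum>y\<in>Y. ch {..<D} q astar y) = 0" .
    then show False using P0 astar(3) by simp
  qed
  have same: "ch {..<D} q a y = ch {..<D} q a y'"
    if "a \<in> XR {..<D} q" "wt {..<D} a = m" "y \<in> Y" "y' \<in> Y" for a y y'
  proof -
    have "of_real (c 0) * of_nat q ^ (D - m) * ch {..<D} q a y = of_real (c 0) * of_nat q ^ (D - m) * ch {..<D} q a y'"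
      using keyI[OF that(1,2,3)] keyI[OF that(1,2,4)] by simp
    then show ?thesis using c0 q1 by simp
  qed
  have yX: "y \<in> XR {..<D} q" if "y \<in> Y" for y using that YX by blast
  have fs: "q = 2 \<and> hdist D y1 y2 = D"
    by (rule fin_struct[OF assms(2) m1 mD yX[OF y12(1)] yX[OF y12(2)] y12(3)])
       (rule same[OF _ _ y12(1) y12(2)])
  have "Y = {y1, y2}"
  proof
    show "{y1, y2} \<subseteq> Y" using y12 by simp
    show "Y \<subseteq> {y1, y2}"
    proof
      fix z assume z: "z \<in> Y"
      show "z \<in> {y1, y2}"
      proof (cases "z = y1")
        case False
        have "q = 2 \<and> hdist D y1 z = D"
          by (rule fin_struct[OF assms(2) m1 mD yX[OF y12(1)] yX[OF z] False[symmetric]])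
             (rule same[OF _ _ y12(1) z])
        then have hz: "hdist D y1 z = D" by simp
        have q2: "q = 2" using fs by simp
        have "z = y2"
          by (rule binary_compl[of y1 D z y2])
             (use yX[OF y12(1)] yX[OF z] yX[OF y12(2)] q2 hz fs in simp_all)
        then show ?thesis by simp
      qed simp
    qed
  qed
  then show False using assms(6) fs by blast
qed

end
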